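(* Let $n\ge 2$ and let $\theta$ be a Schwartz function on $\mathbb{R}^n$ whose Fourier transform $\widehat\theta$ is supported in $\mathcal{A}_{4^{-n-3},4\sqrt n}$ and equals $1$ on $\mathcal{A}_{4^{-n-2},2\sqrt n}$. There exists $\epsilon_1>0$ such that for every sufficiently large $R$ the following holds: for each $x\in\mathcal{A}_{4^{-n-2},2\sqrt n}$, each $t\in(0,1)$ and each $\xi'\in\mathbb{R}^n$ with $|\xi'|\le\epsilon_1R$, $$\Big|\int_{\mathbb{R}^n} e^{2\pi i\left[(x-\frac{2t\xi'}{R})\cdot\xi-\frac{t}{R}|\xi|^2\right]}\theta(\xi)\,d\xi-1\Big|<\frac12.$$
   Context: For $0<u<v$, $\mathcal{A}_{u,v}=\{x\in\mathbb{R}^n: u<|x|<v\}$. The Fourier transform is $\widehat f(\xi)=\int f(x)e^{-2\pi i x\cdot\xi}dx$. *)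

theory Defs
  imports "HOL-Analysis.Analysis"
begin

definition annulus :: "real \<Rightarrow> real \<Rightarrow> (real^'n) set" where
  "annulus u v = {x. u < norm x \<and> norm x < v}"

definition fourier :: "(real^'n \<Rightarrow> complex) \<Rightarrow> real^'n \<Rightarrow> complex" where
  "fourier f \<xi> = (\<integral>x. f x * cis (- 2 * pi * (x \<bullet> \<xi>)) \<partial>lborel)"

text \<open>Schwartz functions: there is a family D indexed by multi-indices alpha with
  D 0 = f, the partial derivative of D alpha in direction i equal to D (alpha + e_i)
  (so all partial derivatives of all orders exist), and every x^beta D^alpha f bounded.\<close>
definition schwartz :: "(real^'n \<Rightarrow> complex) \<Rightarrow> bool" where
  "schwartz f \<longleftrightarrow> (\<exists>D :: ('n \<Rightarrow> nat) \<Rightarrow> real^'n \<Rightarrow> complex.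
      D (\<lambda>_. 0) = f \<and>
      (\<forall>\<alpha> x i. ((\<lambda>s::real. D \<alpha> (x + s *\<^sub>R axis i 1))
                   has_vector_derivative D (\<alpha>(i := Suc (\<alpha> i))) x) (at 0)) \<and>
      (\<forall>\<alpha> \<beta>. \<exists>C. \<forall>x. (\<Prod>i\<in>UNIV. \<bar>x $ i\<bar> ^ \<beta> i) * norm (D \<alpha> x) \<le> C))"

end

theory Submission imports Defs begin

lemma mvt_bound:
  fixes f :: "real \<Rightarrow> 'b::real_normed_vector"
  assumes d: "\<And>s. (f has_vector_derivative f' s) (at s)" and B: "\<And>s. norm (f' s) \<le> C"
  shows "norm (f b - f a) \<le> C * \<bar>b - a\<bar>"
proof -
  have "norm (f b - f a) \<le> C * norm (b - a)"
    apply (rule differentiable_bound[where S=UNIV and f'="\<lambda>x h. h *\<^sub>R f' x"])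
    using d apply (auto simp: has_vector_derivative_def intro!: onorm_le)
    by (metis B abs_ge_zero mult.commute mult_right_mono)
  then show ?thesis by simp
qed

lemma cis_diff_le: "norm (cis a - cis b) \<le> \<bar>a - b\<bar>"
proof -
  have "norm (cis a - cis b) \<le> 1 * \<bar>a - b\<bar>"
    apply (rule mvt_bound[where f'="\<lambda>x. \<i> * cis x"])
    using has_derivative_cis[OF has_derivative_ident, of _ UNIV]
    by (auto simp: has_vector_derivative_def norm_mult)
  then show ?thesis by simp
qed

lemma schwartz_lip:
  fixes f :: "real^'n \<Rightarrow> complex"
  assumes "schwartz f"
  shows "\<exists>L\<ge>0. \<forall>x y. norm (f y - f x) \<le> L * norm (y - x)"
proof -
  obtain D :: "('n \<Rightarrow> nat) \<Rightarrow> real^'n \<Rightarrow> complex" where D0: "D (\<lambda>_. 0) = f"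
    and Dd: "\<And>\<alpha> x i. ((\<lambda>s::real. D \<alpha> (x + s *\<^sub>R axis i 1))
                   has_vector_derivative D (\<alpha>(i := Suc (\<alpha> i))) x) (at 0)"
    and Db: "\<And>\<alpha> \<beta>. \<exists>C. \<forall>x. (\<Prod>i\<in>UNIV. \<bar>x $ i\<bar> ^ \<beta> i) * norm (D \<alpha> x) \<le> C"
    using assms unfolding schwartz_def by blast
  define e where "e i = (\<lambda>_::'n. 0::nat)(i := Suc 0)" for i
  have "\<forall>i. \<exists>C. \<forall>x. norm (D (e i) x) \<le> C"
    using Db[where \<beta>="\<lambda>_. 0"] by simp
  then obtain C where C: "\<And>i x. norm (D (e i) x) \<le> C i" by metis
  have C0: "C i \<ge> 0" for i using C[of i 0] norm_ge_zero order_trans by blast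
  have step: "norm (f (x + s *\<^sub>R axis i 1) - f x) \<le> C i * \<bar>s - 0\<bar>" for x s i
  proof -
    have "norm ((\<lambda>s. f (x + s *\<^sub>R axis i 1)) s - (\<lambda>s. f (x + s *\<^sub>R axis i 1)) 0) \<le> C i * \<bar>s - 0\<bar>"
    proof (rule mvt_bound[where f'="\<lambda>s. D (e i) (x + s *\<^sub>R axis i 1)"])
      fix s :: real
      have 1: "((\<lambda>s'. s' - s) has_vector_derivative 1) (at s)"
        by (auto intro!: derivative_eq_intros)
      have 2: "((\<lambda>u. D (\<lambda>_. 0) ((x + s *\<^sub>R axis i 1) + u *\<^sub>R axis i 1)) has_vector_derivative
          D (e i) (x + s *\<^sub>R axis i 1)) (at ((\<lambda>s'. s' - s) s))"
        using Dd[of "\<lambda>_. 0" "x + s *\<^sub>R axis i 1" i] by (simp add: e_def)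
      have 3: "((\<lambda>u. D (\<lambda>_. 0) ((x + s *\<^sub>R axis i 1) + u *\<^sub>R axis i 1)) \<circ> (\<lambda>s'. s' - s))
               = (\<lambda>s. f (x + s *\<^sub>R axis i 1))"
        by (auto simp: D0 algebra_simps)
      show "((\<lambda>s. f (x + s *\<^sub>R axis i 1)) has_vector_derivative D (e i) (x + s *\<^sub>R axis i 1)) (at s)"
        using vector_diff_chain_at[OF 1 2] 3 by simp
    next
      fix s show "norm (D (e i) (x + s *\<^sub>R axis i 1)) \<le> C i" by (rule C)
    qed
    then show ?thesis by simp
  qed
  define z where "z S x y = (\<chi> j. if j \<in> S then y $ j else x $ j)" for S and x y :: "real^'n"
  have tel: "norm (f (z S x y) - f x) \<le> (\<Sum>i\<in>S. C i * \<bar>y $ i - x $ i\<bar>)" if "finite S" for S x y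
    using that
  proof (induction S rule: finite_induct)
    case empty
    have "z {} x y = x" by (simp add: z_def vec_eq_iff)
    then show ?case by simp
  next
    case (insert i S)
    have eq: "z (insert i S) x y = z S x y + (y $ i - x $ i) *\<^sub>R axis i 1"
      using insert(2) by (auto simp: z_def vec_eq_iff axis_def)
    have "norm (f (z (insert i S) x y) - f x)
        \<le> norm (f (z S x y + (y $ i - x $ i) *\<^sub>R axis i 1) - f (z S x y)) + norm (f (z S x y) - f x)"
      unfolding eq by (rule norm_diff_triangle_le) auto
    also have "\<dots> \<le> C i * \<bar>y $ i - x $ i\<bar> + (\<Sum>i\<in>S. C i * \<bar>y $ i - x $ i\<bar>)"
      using step[of "z S x y" "y $ i - x $ i" i] insert(3) by simp
    finally show ?case using insert by simp
  qed
  show ?thesis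
  proof (intro exI[of _ "\<Sum>i\<in>UNIV. C i"] conjI allI)
    show "0 \<le> (\<Sum>i\<in>UNIV. C i)" using C0 by (simp add: sum_nonneg)
    fix x y :: "real^'n"
    have "z UNIV x y = y" by (simp add: z_def vec_eq_iff)
    then have "norm (f y - f x) \<le> (\<Sum>i\<in>UNIV. C i * \<bar>y $ i - x $ i\<bar>)"
      using tel[of UNIV x y] by simp
    also have "\<dots> \<le> (\<Sum>i\<in>UNIV. C i * norm (y - x))"
      apply (rule sum_mono) apply (rule mult_left_mono)
      using component_le_norm_cart[of "y - x"] C0 by auto
    finally show "norm (f y - f x) \<le> (\<Sum>i\<in>UNIV. C i) * norm (y - x)"
      by (simp add: sum_distrib_right)
  qed
qed

lemma schwartz_cont:
  fixes f :: "real^'n \<Rightarrow> complex"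
  assumes "schwartz f"
  shows "continuous_on UNIV f"
proof -
  obtain L where L: "L \<ge> 0" "\<And>x y. norm (f y - f x) \<le> L * norm (y - x)"
    using schwartz_lip[OF assms] by blast
  have "L-lipschitz_on UNIV f"
    by (rule lipschitz_onI) (use L in \<open>auto simp: dist_norm norm_minus_commute\<close>)
  then show ?thesis by (rule lipschitz_on_continuous_on)
qed


lemma ball_emeasure_bound:
  fixes r :: real assumes r: "r \<ge> 0"
  shows "emeasure lborel (ball (0::real^'n) r) \<le> ennreal ((2 * r) ^ CARD('n))"
proof -
  let ?c = "cbox (\<chi> i. - r) (\<chi> i. r) :: (real^'n) set"
  have sub: "ball 0 r \<subseteq> ?c"
  proof
    fix x :: "real^'n" assume "x \<in> ball 0 r"
    then have "norm x < r" by simp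
    then have "\<bar>x $ i\<bar> \<le> r" for i using component_le_norm_cart[of x i] by linarith
    then have "- r \<le> x $ i \<and> x $ i \<le> r" for i using abs_le_D1 abs_le_D2[of "x $ i" r] by fastforce
    then show "x \<in> ?c" unfolding mem_box_cart by simp
  qed
  have "0 \<in> ?c" using r by (simp add: mem_box_cart)
  then have ne: "?c \<noteq> {}" by blast
  have "emeasure lborel (ball (0::real^'n) r) \<le> emeasure lborel ?c"
    by (rule emeasure_mono[OF sub]) simp
  also have "\<dots> = ennreal (measure lborel ?c)"
    by (rule emeasure_eq_ennreal_measure) (use emeasure_lborel_cbox_finite in \<open>simp add: less_top[symmetric]\<close>)
  also have "measure lborel ?c = (2 * r) ^ CARD('n)"
    using ne by (simp add: content_cbox_cart)
  finally show ?thesis .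
qed

lemma ennreal_le_suminf: "(f i :: ennreal) \<le> (\<Sum>i. f i)"
proof (rule ccontr)
  assume "\<not> f i \<le> (\<Sum>i. f i)"
  then have "(\<Sum>i. f i) < f i" by simp
  then have "f i < f i" by (rule ennreal_suminf_lessD)
  then show False by simp
qed


lemma schwartz_decay:
  fixes f :: "real^'n \<Rightarrow> complex"
  assumes "schwartz f"
  shows "\<exists>K. \<forall>x. norm x ^ N * norm (f x) \<le> K"
proof -
  obtain D :: "('n \<Rightarrow> nat) \<Rightarrow> real^'n \<Rightarrow> complex" where D0: "D (\<lambda>_. 0) = f"
    and Db: "\<And>\<alpha> \<beta>. \<exists>C. \<forall>x. (\<Prod>i\<in>UNIV. \<bar>x $ i\<bar> ^ \<beta> i) * norm (D \<alpha> x) \<le> C"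
    using assms unfolding schwartz_def by blast
  have pr: "(\<Prod>j\<in>UNIV. \<bar>x $ j\<bar> ^ ((\<lambda>_. 0)(i := N)) j) = \<bar>x $ i\<bar> ^ N" for x :: "real^'n" and i
  proof -
    have "(\<Prod>j\<in>UNIV. \<bar>x $ j\<bar> ^ ((\<lambda>_. 0)(i := N)) j) = (\<Prod>j\<in>UNIV. if j = i then \<bar>x $ j\<bar> ^ N else 1)"
      by (rule prod.cong) auto
    also have "\<dots> = \<bar>x $ i\<bar> ^ N" by (simp add: prod.delta)
    finally show ?thesis .
  qed
  have "\<forall>i. \<exists>C. \<forall>x. \<bar>x $ i\<bar> ^ N * norm (f x) \<le> C"
    using Db[where \<alpha>="\<lambda>_. 0"] pr D0 by metis
  then obtain C where C: "\<And>i x. \<bar>x $ i\<bar> ^ N * norm (f x) \<le> C i" by metis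
  have C0: "C i \<ge> 0" for i by (rule order_trans[OF _ C[where i=i and x=0]]) simp
  show ?thesis
  proof (intro exI allI)
    fix x :: "real^'n"
    have "Max (range (\<lambda>j. \<bar>x $ j\<bar>)) \<in> range (\<lambda>j. \<bar>x $ j\<bar>)"
      by (rule Max_in) auto
    then obtain i where iM: "\<bar>x $ i\<bar> = Max (range (\<lambda>j. \<bar>x $ j\<bar>))" by (metis (no_types, lifting) imageE)
    have i: "\<bar>x $ j\<bar> \<le> \<bar>x $ i\<bar>" for j unfolding iM by (rule Max_ge) auto
    have "norm x \<le> (\<Sum>j\<in>UNIV. \<bar>x $ j\<bar>)" by (rule norm_le_l1_cart)
    also have "\<dots> \<le> (\<Sum>j\<in>(UNIV::'n set). \<bar>x $ i\<bar>)" by (rule sum_mono) (use i in auto)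
    finally have nx: "norm x \<le> real CARD('n) * \<bar>x $ i\<bar>" by simp
    have "norm x ^ N * norm (f x) \<le> (real CARD('n) * \<bar>x $ i\<bar>) ^ N * norm (f x)"
      by (rule mult_right_mono[OF power_mono[OF nx]]) auto
    also have "\<dots> = real CARD('n) ^ N * (\<bar>x $ i\<bar> ^ N * norm (f x))"
      by (simp add: power_mult_distrib)
    also have "\<dots> \<le> real CARD('n) ^ N * C i" by (rule mult_left_mono[OF C]) simp
    also have "\<dots> \<le> real CARD('n) ^ N * (\<Sum>j\<in>UNIV. C j)"
      by (rule mult_left_mono) (auto intro!: member_le_sum C0)
    finally show "norm x ^ N * norm (f x) \<le> real CARD('n) ^ N * (\<Sum>j\<in>UNIV. C j)" .
  qed
qed


lemma integrable_decay:
  fixes h :: "real^'n \<Rightarrow> real"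
  assumes meas: "h \<in> borel_measurable lborel" and nn: "\<And>x. 0 \<le> h x"
    and bd: "\<And>x. (1 + norm x) ^ (CARD('n) + 2) * h x \<le> K"
  shows "integrable lborel h"
proof -
  let ?d = "CARD('n)"
  have K0: "0 \<le> K" by (rule order_trans[OF _ bd[of 0]]) (simp add: nn)
  define a where "a m = K / (real m + 1) ^ (?d + 2)" for m :: nat
  have a0: "0 \<le> a m" for m using K0 by (simp add: a_def)
  have pt: "ennreal (h x) \<le> (\<Sum>m. ennreal (a m) * indicator (ball (0::real^'n) (real m + 1)) x)" for x
  proof -
    define m where "m = nat \<lfloor>norm x\<rfloor>"
    have rm: "real m = of_int \<lfloor>norm x\<rfloor>" by (simp add: m_def)
    have m1: "real m \<le> norm x" "norm x < real m + 1"
      unfolding rm by (simp_all add: floor_le_iff)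
    have "(real m + 1) ^ (?d + 2) * h x \<le> (1 + norm x) ^ (?d + 2) * h x"
      by (rule mult_right_mono[OF power_mono]) (use m1 nn in auto)
    then have "(real m + 1) ^ (?d + 2) * h x \<le> K" using bd[of x] by linarith
    then have "h x \<le> a m" unfolding a_def by (subst pos_le_divide_eq) (auto simp: mult.commute)
    then have "ennreal (h x) \<le> ennreal (a m) * indicator (ball (0::real^'n) (real m + 1)) x"
      using m1 by (simp add: indicator_def ennreal_leI)
    also have "\<dots> \<le> (\<Sum>m. ennreal (a m) * indicator (ball (0::real^'n) (real m + 1)) x)"
      by (rule ennreal_le_suminf)
    finally show ?thesis .
  qed
  have eqa: "a m * (2 * (real m + 1)) ^ ?d = (K * 2 ^ ?d) * inverse (real (Suc m) ^ 2)" for m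
  proof -
    have p: "(real m + 1) ^ ?d > 0" by simp
    have "a m * (2 * (real m + 1)) ^ ?d
        = (K * 2 ^ ?d) * ((real m + 1) ^ ?d / ((real m + 1) ^ ?d * (real m + 1) ^ 2))"
      unfolding a_def power_add power_mult_distrib by (simp add: field_simps)
    also have "\<dots> = (K * 2 ^ ?d) * inverse ((real m + 1) ^ 2)"
      using p by (simp add: divide_inverse)
    finally show ?thesis by (simp add: add.commute)
  qed
  have sm: "summable (\<lambda>m. (K * 2 ^ ?d) * inverse (real (Suc m) ^ 2))"
    apply (rule summable_mult)
    using inverse_power_summable[of 2, where 'a=real] summable_Suc_iff[of "\<lambda>n. inverse (real n ^ 2)"]
    by simp
  have [measurable]: "ball (0::real^'n) r \<in> sets borel" for r by simp
  have "(\<integral>\<^sup>+x. ennreal (norm (h x)) \<partial>lborel) = (\<integral>\<^sup>+x. ennreal (h x) \<partial>lborel)"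
    using nn by simp
  also have "\<dots> \<le> (\<integral>\<^sup>+x. (\<Sum>m. ennreal (a m) * indicator (ball (0::real^'n) (real m + 1)) x) \<partial>lborel)"
    by (rule nn_integral_mono) (rule pt)
  also have "\<dots> = (\<Sum>m. \<integral>\<^sup>+x. ennreal (a m) * indicator (ball (0::real^'n) (real m + 1)) x \<partial>lborel)"
    by (rule nn_integral_suminf) measurable
  also have "\<dots> = (\<Sum>m. ennreal (a m) * emeasure lborel (ball (0::real^'n) (real m + 1)))"
    by (simp add: nn_integral_cmult_indicator)
  also have "\<dots> \<le> (\<Sum>m. ennreal (a m) * ennreal ((2 * (real m + 1)) ^ ?d))"
    by (intro suminf_le mult_left_mono ball_emeasure_bound summableI) auto
  also have "\<dots> = (\<Sum>m. ennreal ((K * 2 ^ ?d) * inverse (real (Suc m) ^ 2)))"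
  proof (rule suminf_cong)
    fix m
    have e: "ennreal (a m * (2 * (real m + 1)) ^ ?d) = ennreal (a m) * ennreal ((2 * (real m + 1)) ^ ?d)"
      by (rule ennreal_mult[OF a0]) simp
    show "ennreal (a m) * ennreal ((2 * (real m + 1)) ^ ?d) = ennreal ((K * 2 ^ ?d) * inverse (real (Suc m) ^ 2))"
      unfolding e[symmetric] eqa ..
  qed
  also have "\<dots> = ennreal (\<Sum>m. (K * 2 ^ ?d) * inverse (real (Suc m) ^ 2))"
  proof (rule suminf_ennreal2)
    show "summable (\<lambda>m. (K * 2 ^ ?d) * inverse (real (Suc m) ^ 2))" by (rule sm)
    fix m show "0 \<le> (K * 2 ^ ?d) * inverse (real (Suc m) ^ 2)" using K0 by simp
  qed
  finally have le: "(\<integral>\<^sup>+x. ennreal (norm (h x)) \<partial>lborel) \<le> ennreal (\<Sum>m. (K * 2 ^ ?d) * inverse (real (Suc m) ^ 2))" .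
  have "(\<integral>\<^sup>+x. ennreal (norm (h x)) \<partial>lborel) < \<infinity>"
    using le_less_trans[OF le ennreal_less_top] by simp
  then show ?thesis by (intro integrableI_bounded meas)
qed


lemma key_bound:
  fixes \<theta> :: "real^'n \<Rightarrow> complex" and x y :: "real^'n" and s :: real
  assumes m\<theta>: "\<theta> \<in> borel_measurable borel" and c\<theta>: "continuous_on UNIV \<theta>"
    and int\<theta>: "integrable lborel \<theta>"
    and inth: "integrable lborel (\<lambda>\<xi>. (1 + (norm \<xi>)\<^sup>2) * norm (\<theta> \<xi>))"
  shows "norm ((\<integral>\<xi>. cis (2 * pi * (y \<bullet> \<xi> - s * (norm \<xi>)\<^sup>2)) * \<theta> \<xi> \<partial>lborel)
              - (\<integral>\<xi>. cis (2 * pi * (x \<bullet> \<xi>)) * \<theta> \<xi> \<partial>lborel))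
         \<le> 2 * pi * (norm (y - x) + \<bar>s\<bar>) * (\<integral>\<xi>. (1 + (norm \<xi>)\<^sup>2) * norm (\<theta> \<xi>) \<partial>lborel)"
proof -
  define F where "F \<xi> = cis (2 * pi * (y \<bullet> \<xi> - s * (norm \<xi>)\<^sup>2)) * \<theta> \<xi>" for \<xi>
  define G where "G \<xi> = cis (2 * pi * (x \<bullet> \<xi>)) * \<theta> \<xi>" for \<xi>
  define h where "h \<xi> = (1 + (norm \<xi>)\<^sup>2) * norm (\<theta> \<xi>)" for \<xi> :: "real^'n"
  define \<delta> where "\<delta> = norm (y - x) + \<bar>s\<bar>"
  have cF: "continuous_on UNIV F" unfolding F_def
    by (intro continuous_intros c\<theta>)
  have cG: "continuous_on UNIV G" unfolding G_def
    by (intro continuous_intros c\<theta>)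
  have iF: "integrable lborel F"
    by (rule Bochner_Integration.integrable_bound[OF int\<theta>]) (auto simp: F_def norm_mult intro: borel_measurable_continuous_onI[OF cF])
  have iG: "integrable lborel G"
    by (rule Bochner_Integration.integrable_bound[OF int\<theta>]) (auto simp: G_def norm_mult intro: borel_measurable_continuous_onI[OF cG])
  have pt: "norm (F \<xi> - G \<xi>) \<le> (2 * pi * \<delta>) * h \<xi>" for \<xi>
  proof -
    define A where "A = 2 * pi * (y \<bullet> \<xi> - s * (norm \<xi>)\<^sup>2)"
    define B where "B = 2 * pi * (x \<bullet> \<xi>)"
    have d1: "norm (F \<xi> - G \<xi>) = norm (cis A - cis B) * norm (\<theta> \<xi>)"
      unfolding F_def G_def A_def B_def by (simp add: left_diff_distrib[symmetric] norm_mult)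
    have eq: "A - B = 2 * pi * ((y - x) \<bullet> \<xi> - s * (norm \<xi>)\<^sup>2)"
      unfolding A_def B_def by (simp add: inner_diff_left right_diff_distrib)
    have b1: "\<bar>(y - x) \<bullet> \<xi> - s * (norm \<xi>)\<^sup>2\<bar> \<le> norm (y - x) * norm \<xi> + \<bar>s\<bar> * (norm \<xi>)\<^sup>2"
    proof -
      have "\<bar>(y - x) \<bullet> \<xi>\<bar> \<le> norm (y - x) * norm \<xi>" by (rule Cauchy_Schwarz_ineq2)
      moreover have "\<bar>s * (norm \<xi>)\<^sup>2\<bar> = \<bar>s\<bar> * (norm \<xi>)\<^sup>2" by (simp add: abs_mult)
      ultimately show ?thesis by linarith
    qed
    have b2: "norm (y - x) * norm \<xi> + \<bar>s\<bar> * (norm \<xi>)\<^sup>2 \<le> \<delta> * (1 + (norm \<xi>)\<^sup>2)"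
    proof -
      have a: "norm \<xi> \<le> 1 + (norm \<xi>)\<^sup>2"
      proof (cases "norm \<xi> \<le> 1")
        case True
        then show ?thesis by (simp add: add_increasing2)
      next
        case False
        then have "norm \<xi> * 1 \<le> norm \<xi> * norm \<xi>" by (intro mult_left_mono) auto
        then show ?thesis by (simp add: power2_eq_square)
      qed
      have "norm (y - x) * norm \<xi> \<le> norm (y - x) * (1 + (norm \<xi>)\<^sup>2)"
        by (rule mult_left_mono[OF a]) simp
      moreover have "\<bar>s\<bar> * (norm \<xi>)\<^sup>2 \<le> \<bar>s\<bar> * (1 + (norm \<xi>)\<^sup>2)"
        by (rule mult_left_mono) auto
      ultimately show ?thesis unfolding \<delta>_def by (simp add: distrib_right)
    qed
    have "\<bar>A - B\<bar> = 2 * pi * \<bar>(y - x) \<bullet> \<xi> - s * (norm \<xi>)\<^sup>2\<bar>"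
      unfolding eq abs_mult by simp
    also have "\<dots> \<le> 2 * pi * (\<delta> * (1 + (norm \<xi>)\<^sup>2))"
      using b1 b2 by (intro mult_left_mono) auto
    finally have d3: "\<bar>A - B\<bar> \<le> 2 * pi * (\<delta> * (1 + (norm \<xi>)\<^sup>2))" .
    have "norm (F \<xi> - G \<xi>) \<le> (2 * pi * (\<delta> * (1 + (norm \<xi>)\<^sup>2))) * norm (\<theta> \<xi>)"
      unfolding d1 using cis_diff_le[of A B] d3 by (intro mult_right_mono) auto
    also have "\<dots> = (2 * pi * \<delta>) * h \<xi>" by (simp add: h_def mult.assoc)
    finally show ?thesis .
  qed
  have "(\<integral>\<xi>. cis (2 * pi * (y \<bullet> \<xi> - s * (norm \<xi>)\<^sup>2)) * \<theta> \<xi> \<partial>lborel)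
              - (\<integral>\<xi>. cis (2 * pi * (x \<bullet> \<xi>)) * \<theta> \<xi> \<partial>lborel) = (\<integral>\<xi>. F \<xi> - G \<xi> \<partial>lborel)"
  proof -
    have "(\<integral>\<xi>. F \<xi> - G \<xi> \<partial>lborel) = integral\<^sup>L lborel F - integral\<^sup>L lborel G"
      by (rule Bochner_Integration.integral_diff[OF iF iG])
    then show ?thesis by (simp add: F_def[abs_def] G_def[abs_def])
  qed
  also have "norm \<dots> \<le> (\<integral>\<xi>. (2 * pi * \<delta>) * h \<xi> \<partial>lborel)"
    by (rule Bochner_Integration.integral_norm_bound_integral) (use iF iG inth pt in \<open>auto simp: h_def\<close>)
  also have "\<dots> = 2 * pi * \<delta> * (\<integral>\<xi>. h \<xi> \<partial>lborel)" by simp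
  finally show ?thesis by (simp add: \<delta>_def h_def)
qed


lemma one_plus_pow: "(0::real) \<le> r \<Longrightarrow> (1 + r) ^ N \<le> 2 ^ N * (1 + r ^ N)"
proof (cases "r \<le> 1")
  case True
  assume r: "0 \<le> r"
  have "(1 + r) ^ N \<le> 2 ^ N" using True r by (intro power_mono) auto
  also have "\<dots> \<le> 2 ^ N * (1 + r ^ N)" using r by simp
  finally show ?thesis .
next
  case False
  assume r: "0 \<le> r"
  have "(1 + r) ^ N \<le> (2 * r) ^ N" using False r by (intro power_mono) auto
  also have "\<dots> \<le> 2 ^ N * (1 + r ^ N)" using r by (simp add: power_mult_distrib)
  finally show ?thesis .
qed

theorem lemma2p2:
  fixes \<theta> :: "real^'n \<Rightarrow> complex"
  assumes n2: "CARD('n) \<ge> 2"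
    and sch: "schwartz \<theta>"
    and supp: "closure {\<xi>. fourier \<theta> \<xi> \<noteq> 0}
                 \<subseteq> annulus (4 powr (- real CARD('n) - 3)) (4 * sqrt (real CARD('n)))"
    and one: "\<forall>\<xi> \<in> annulus (4 powr (- real CARD('n) - 2)) (2 * sqrt (real CARD('n))).
                 fourier \<theta> \<xi> = 1"
  shows "\<exists>\<epsilon>1>0. \<forall>\<^sub>F R in at_top.
           \<forall>x \<in> annulus (4 powr (- real CARD('n) - 2)) (2 * sqrt (real CARD('n))).
           \<forall>t \<in> {0<..<1}. \<forall>\<xi>'. norm \<xi>' \<le> \<epsilon>1 * R \<longrightarrow>
             norm ((\<integral>\<xi>. cis (2 * pi * ((x - (2 * t / R) *\<^sub>R \<xi>') \<bullet> \<xi> - (t / R) * (norm \<xi>)\<^sup>2))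
                        * \<theta> \<xi> \<partial>lborel) - 1) < 1 / 2"
proof -
  let ?d = "CARD('n)"
  have c\<theta>: "continuous_on UNIV \<theta>" by (rule schwartz_cont[OF sch])
  have m\<theta>: "\<theta> \<in> borel_measurable borel" by (rule borel_measurable_continuous_onI[OF c\<theta>])
  obtain K0 where K0: "\<And>x. norm x ^ 0 * norm (\<theta> x) \<le> K0" using schwartz_decay[OF sch] by blast
  obtain K1 where K1: "\<And>x. norm x ^ (?d + 4) * norm (\<theta> x) \<le> K1" using schwartz_decay[OF sch] by blast
  define h where "h \<xi> = (1 + (norm \<xi>)\<^sup>2) * norm (\<theta> \<xi>)" for \<xi> :: "real^'n"
  have h0: "0 \<le> h \<xi>" for \<xi> by (simp add: h_def)
  have hb: "(1 + norm \<xi>) ^ (?d + 2) * h \<xi> \<le> 2 ^ (?d + 4) * (K0 + K1)" for \<xi>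
  proof -
    let ?r = "norm \<xi>"
    have "1 + ?r\<^sup>2 \<le> (1 + ?r)\<^sup>2" by (simp add: power2_sum)
    then have "(1 + ?r) ^ (?d + 2) * h \<xi> \<le> (1 + ?r) ^ (?d + 2) * ((1 + ?r)\<^sup>2 * norm (\<theta> \<xi>))"
      unfolding h_def by (intro mult_left_mono mult_right_mono) auto
    also have "\<dots> = (1 + ?r) ^ (?d + 4) * norm (\<theta> \<xi>)"
      by (simp only: mult.assoc[symmetric] power_add[symmetric]) (simp add: numeral_eq_Suc)
    also have "\<dots> \<le> 2 ^ (?d + 4) * (1 + ?r ^ (?d + 4)) * norm (\<theta> \<xi>)"
      by (intro mult_right_mono one_plus_pow) auto
    also have "\<dots> = 2 ^ (?d + 4) * (?r ^ 0 * norm (\<theta> \<xi>) + ?r ^ (?d + 4) * norm (\<theta> \<xi>))"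
      by (simp add: algebra_simps)
    also have "\<dots> \<le> 2 ^ (?d + 4) * (K0 + K1)"
      by (intro mult_left_mono add_mono K0 K1) simp
    finally show ?thesis .
  qed
  have ch: "continuous_on UNIV h" unfolding h_def by (intro continuous_intros c\<theta>)
  have inth: "integrable lborel h"
    by (rule integrable_decay[OF _ h0 hb]) (simp add: borel_measurable_continuous_onI[OF ch])
  have int\<theta>: "integrable lborel \<theta>"
    by (rule Bochner_Integration.integrable_bound[OF inth]) (auto simp: m\<theta> h_def mult_le_cancel_right1)
  define M where "M = (\<integral>\<xi>. h \<xi> \<partial>lborel)"
  have M0: "0 \<le> M" unfolding M_def using h0 by (simp add: Bochner_Integration.integral_nonneg)
  define \<epsilon> where "\<epsilon> = 1 / (32 * pi * (M + 1))"
  have \<epsilon>0: "\<epsilon> > 0" using M0 by (simp add: \<epsilon>_def)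
  show ?thesis
  proof (intro exI[of _ \<epsilon>] conjI \<epsilon>0)
    show "\<forall>\<^sub>F R in at_top.
           \<forall>x \<in> annulus (4 powr (- real CARD('n) - 2)) (2 * sqrt (real CARD('n))).
           \<forall>t \<in> {0<..<1}. \<forall>\<xi>'. norm \<xi>' \<le> \<epsilon> * R \<longrightarrow>
             norm ((\<integral>\<xi>. cis (2 * pi * ((x - (2 * t / R) *\<^sub>R \<xi>') \<bullet> \<xi> - (t / R) * (norm \<xi>)\<^sup>2))
                        * \<theta> \<xi> \<partial>lborel) - 1) < 1 / 2"
      using eventually_ge_at_top[of "32 * pi * (M + 1)"]
    proof eventually_elim
      case (elim R)
      have "32 * pi * (M + 1) > 0" using M0 by simp
      then have R0: "R > 0" using elim by linarith
      have eR: "\<epsilon> * R \<ge> 1"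
      proof -
        have p: "32 * pi * (M + 1) > 0" using M0 by simp
        have "\<epsilon> * R = R / (32 * pi * (M + 1))" by (simp add: \<epsilon>_def)
        also have "\<dots> \<ge> 1" using elim p by (simp add: le_divide_eq)
        finally show ?thesis .
      qed
      show ?case
      proof (intro ballI allI impI)
        fix x :: "real^'n" and t :: real and \<xi>' :: "real^'n"
        assume xA: "x \<in> annulus (4 powr (- real CARD('n) - 2)) (2 * sqrt (real CARD('n)))"
          and t: "t \<in> {0<..<1}" and \<xi>': "norm \<xi>' \<le> \<epsilon> * R"
        define y where "y = x - (2 * t / R) *\<^sub>R \<xi>'"
        have G1: "(\<integral>\<xi>. cis (2 * pi * (x \<bullet> \<xi>)) * \<theta> \<xi> \<partial>lborel) = 1"
        proof -
          have "- x \<in> annulus (4 powr (- real CARD('n) - 2)) (2 * sqrt (real CARD('n)))"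
            using xA by (simp add: annulus_def)
          then have "fourier \<theta> (- x) = 1" using one by blast
          then show ?thesis by (simp add: fourier_def mult.commute inner_commute)
        qed
        have kb: "norm ((\<integral>\<xi>. cis (2 * pi * (y \<bullet> \<xi> - (t / R) * (norm \<xi>)\<^sup>2)) * \<theta> \<xi> \<partial>lborel)
              - (\<integral>\<xi>. cis (2 * pi * (x \<bullet> \<xi>)) * \<theta> \<xi> \<partial>lborel))
         \<le> 2 * pi * (norm (y - x) + \<bar>t / R\<bar>) * M"
          unfolding M_def h_def by (rule key_bound[OF m\<theta> c\<theta> int\<theta>]) (use inth in \<open>simp add: h_def[abs_def]\<close>)
        have ny: "norm (y - x) \<le> 2 * \<epsilon>"
        proof -
          have "norm (y - x) = (2 * t / R) * norm \<xi>'" using t R0 by (simp add: y_def)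
          also have "\<dots> \<le> (2 * t / R) * (\<epsilon> * R)" using t R0 \<xi>' by (intro mult_left_mono) auto
          also have "\<dots> = 2 * t * \<epsilon>" using R0 by simp
          also have "\<dots> \<le> 2 * \<epsilon>" using t \<epsilon>0 by simp
          finally show ?thesis .
        qed
        have ns: "\<bar>t / R\<bar> \<le> \<epsilon>"
        proof -
          have "\<bar>t / R\<bar> = t / R" using t R0 by simp
          also have "\<dots> \<le> 1 / R" using t R0 by (simp add: divide_right_mono)
          also have "\<dots> \<le> \<epsilon>" using eR R0 by (simp add: field_simps)
          finally show ?thesis .
        qed
        have "2 * pi * (norm (y - x) + \<bar>t / R\<bar>) * M \<le> 2 * pi * (3 * \<epsilon>) * M"
          using ny ns M0 by (intro mult_right_mono mult_left_mono) auto
        also have "\<dots> = (3 / 16) * ((32 * pi * \<epsilon>) * M)" by (simp add: algebra_simps)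
        also have "\<dots> < 1 / 2"
        proof -
          have p: "32 * pi * (M + 1) \<noteq> 0" using M0 by simp
          have e1: "(32 * pi * \<epsilon>) * (M + 1) = 1" unfolding \<epsilon>_def using p by (simp add: field_simps)
          have "(32 * pi * \<epsilon>) * M \<le> (32 * pi * \<epsilon>) * (M + 1)"
            using \<epsilon>0 by (intro mult_left_mono) auto
          then show ?thesis using e1 by linarith
        qed
        finally show "norm ((\<integral>\<xi>. cis (2 * pi * ((x - (2 * t / R) *\<^sub>R \<xi>') \<bullet> \<xi> - (t / R) * (norm \<xi>)\<^sup>2))
                        * \<theta> \<xi> \<partial>lborel) - 1) < 1 / 2"
          using kb G1 by (simp add: y_def)
      qed
    qed
  qed
qed

end
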